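(* Let $n,d$ be positive integers, let $\mathcal{C}\subseteq S_n$ be an $(n,d)$-permutation code under the block permutation metric, and let $\mathcal{F}=\{A(\pi):\pi\in\mathcal{C}\}$. Then $$|\mathcal{F}|\leqslant \frac{\binom{n}{d}\binom{n}{d}(n-d)!}{\binom{n-1}{n-d}}.$$
   Context: $S_n$ is the symmetric group on $[n]$, permutations written $\pi=(\pi(1),\dots,\pi(n))$. The characteristic set of $\pi$ is $A(\pi)=\{(\pi(i),\pi(i+1)):1\leqslant i<n\}$. The block permutation distance is $d_B(\pi_1,\pi_2)=|A(\pi_1)\setminus A(\pi_2)|$ (equivalently, $d_B(\pi_1,\pi_2)+1$ is the minimum number of consecutive segments into which $\pi_1$ must be cut so that $\pi_2$ is obtained by rearranging these segments). An $(n,d)$-permutation code is a subset $\mathcal{C}\subseteq S_n$ with $d_B(\pi,\sigma)\geqslant d$ for all distinct $\pi,\sigma\in\mathcal{C}$. *)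

theory Defs
  imports Complex_Main
begin

text \<open>A permutation of [n] in one-line notation, as the list (pi(1),...,pi(n)).\<close>
definition Sym :: "nat \<Rightarrow> nat list set" where
  "Sym n = {p. distinct p \<and> set p = {1..n}}"

definition char_set :: "nat list \<Rightarrow> (nat \<times> nat) set" where
  "char_set p = {(p ! i, p ! (i + 1)) | i. i + 1 < length p}"

definition block_dist :: "nat list \<Rightarrow> nat list \<Rightarrow> nat" where
  "block_dist p q = card (char_set p - char_set q)"

definition perm_code :: "nat \<Rightarrow> nat \<Rightarrow> nat list set \<Rightarrow> bool" where
  "perm_code n d C \<longleftrightarrow> C \<subseteq> Sym n \<and>
     (\<forall>p\<in>C. \<forall>q\<in>C. p \<noteq> q \<longrightarrow> block_dist p q \<ge> d)"

end

theory Submission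
  imports Defs "HOL-Library.FuncSet"
begin

lemma cs_eq: "char_set p = (\<lambda>i. (p ! i, p ! (i + 1))) ` {i. i + 1 < length p}"
  unfolding char_set_def by auto

lemma cs_fst:
  assumes "distinct p" "(a,b) \<in> char_set p" "(a,b') \<in> char_set p"
  shows "b = b'"
proof -
  obtain i where i: "i + 1 < length p" "a = p ! i" "b = p ! (i+1)" using assms(2) unfolding char_set_def by auto
  obtain j where j: "j + 1 < length p" "a = p ! j" "b' = p ! (j+1)" using assms(3) unfolding char_set_def by auto
  have "i = j" using i j assms(1) nth_eq_iff_index_eq by fastforce
  then show ?thesis using i j by simp
qed

lemma cs_snd:
  assumes "distinct p" "(a,b) \<in> char_set p" "(a',b) \<in> char_set p"
  shows "a = a'"
proof -
  obtain i where i: "i + 1 < length p" "a = p ! i" "b = p ! (i+1)" using assms(2) unfolding char_set_def by auto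
  obtain j where j: "j + 1 < length p" "a' = p ! j" "b = p ! (j+1)" using assms(3) unfolding char_set_def by auto
  have "i + 1 = j + 1" using i j assms(1) nth_eq_iff_index_eq by fastforce
  then show ?thesis using i j by simp
qed

lemma cs_sub: "char_set p \<subseteq> set p \<times> set p"
  unfolding char_set_def by auto

lemma cs_fin: "finite (char_set p)"
proof -
  have "{i. i + 1 < length p} \<subseteq> {..<length p}" by auto
  then have "finite {i. i + 1 < length p}" using finite_subset by blast
  then show ?thesis unfolding cs_eq by simp
qed

lemma cs_card:
  assumes "distinct p" "p \<noteq> []"
  shows "card (char_set p) = length p - 1"
proof -
  have "inj_on (\<lambda>i. (p ! i, p ! (i + 1))) {i. i + 1 < length p}"
    using assms(1) nth_eq_iff_index_eq by (auto simp: inj_on_def)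
  then have "card (char_set p) = card {i. i + 1 < length p}"
    unfolding cs_eq by (rule card_image)
  also have "{i. i + 1 < length p} = {..<length p - 1}" by auto
  finally show ?thesis by simp
qed

lemma prod_fact:
  "k \<le> n \<Longrightarrow> prod ((-) n) {0..<k} * fact (n - k) = (fact n :: nat)"
proof (induction k)
  case 0
  then show ?case by simp
next
  case (Suc k)
  have e: "n - k = Suc (n - Suc k)" using Suc.prems by simp
  have "fact (n - k) = (n - k) * (fact (n - Suc k) :: nat)"
    unfolding e fact_Suc by simp
  then show ?case using Suc by (simp add: mult.assoc)
qed

theorem mainTheorem7:
  fixes n d :: nat and C :: "nat list set"
  assumes "0 < n" and "0 < d" and "d \<le> n"
    and "perm_code n d C"
  shows "real (card (char_set ` C)) \<le>
    real ((n choose d) * (n choose d) * fact (n - d)) / real ((n - 1) choose (n - d))"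
proof -
  define k where "k = n - d"
  define F where "F = char_set ` C"
  have CS: "C \<subseteq> Sym n" using assms(4) unfolding perm_code_def by auto
  have fin: "finite C"
  proof (rule finite_subset[OF CS])
    have "Sym n \<subseteq> {xs. set xs \<subseteq> {1..n} \<and> length xs \<le> n}"
      unfolding Sym_def using distinct_card by fastforce
    then show "finite (Sym n)" using finite_lists_length_le[of "{1..n}" n] finite_subset by blast
  qed
  have lenp: "length p = n" "distinct p" "set p = {1..n}" if "p \<in> C" for p
    using CS that distinct_card[of p] unfolding Sym_def by auto
  have cardA: "card (char_set p) = n - 1" if "p \<in> C" for p
    using cs_card[of p] lenp[OF that] assms(1) by auto
  define G where "G = (\<lambda>A :: (nat \<times> nat) set. {S. S \<subseteq> A \<and> card S = k})"
  have finF: "finite F" using fin F_def by simp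
  have finA: "finite A" if "A \<in> F" for A
    using that cs_fin unfolding F_def by auto
  have disj: "G A \<inter> G B = {}" if hAB: "A \<in> F" "B \<in> F" "A \<noteq> B" for A B
  proof (rule ccontr)
    assume "G A \<inter> G B \<noteq> {}"
    then obtain S where S: "S \<subseteq> A" "S \<subseteq> B" "card S = k" unfolding G_def by auto
    obtain p q where pq: "p \<in> C" "q \<in> C" "A = char_set p" "B = char_set q"
      using hAB unfolding F_def by auto
    have "p \<noteq> q" using pq hAB by auto
    then have dd: "card (A - B) \<ge> d" using assms(4) pq unfolding perm_code_def block_dist_def by auto
    have e: "A = (A - B) \<union> (A \<inter> B)" by blast
    have "card ((A - B) \<union> (A \<inter> B)) = card (A - B) + card (A \<inter> B)"
      using finA[OF hAB(1)] by (intro card_Un_disjoint) auto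
    then have "card A = card (A - B) + card (A \<inter> B)" using e by simp
    moreover have "card S \<le> card (A \<inter> B)" using S finA[OF hAB(1)] by (intro card_mono) auto
    moreover have "card A = n - 1" using cardA[OF pq(1)] pq(3) by simp
    ultimately show False using dd S(3) k_def assms by linarith
  qed
  have cardG: "card (G A) = (n - 1) choose k" if "A \<in> F" for A
    using n_subsets[OF finA[OF that], of k] that cardA unfolding G_def F_def by auto
  have "card (\<Union>A\<in>F. G A) = (\<Sum>A\<in>F. card (G A))"
    by (rule card_UN_disjoint) (use finF finA disj in \<open>auto simp: G_def\<close>)
  also have "\<dots> = card F * ((n - 1) choose k)" using cardG by simp
  finally have eq1: "card (\<Union>A\<in>F. G A) = card F * ((n - 1) choose k)" .
  define Ts where "Ts = {T. T \<subseteq> {1..n} \<and> card T = k}"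
  define Fs where "Fs = (\<lambda>T :: nat set. {f \<in> T \<rightarrow>\<^sub>E {1..n}. inj_on f T})"
  define gr where "gr = (\<lambda>(T, f). (\<lambda>x. (x, f x :: nat)) ` (T :: nat set))"
  have sub: "(\<Union>A\<in>F. G A) \<subseteq> gr ` Sigma Ts Fs"
  proof
    fix S assume "S \<in> (\<Union>A\<in>F. G A)"
    then obtain p where p: "p \<in> C" "S \<subseteq> char_set p" "card S = k" unfolding G_def F_def by auto
    note pp = lenp[OF p(1)]
    have uniq: "b = b'" if "(a,b) \<in> S" "(a,b') \<in> S" for a b b' using cs_fst[OF pp(2)] that p(2) by blast
    have uniq2: "a = a'" if "(a,b) \<in> S" "(a',b) \<in> S" for a a' b using cs_snd[OF pp(2)] that p(2) by blast
    have Sn: "S \<subseteq> {1..n} \<times> {1..n}" using p(2) cs_sub[of p] pp by auto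
    define T where "T = fst ` S"
    define f where "f = restrict (\<lambda>x. THE y. (x, y) \<in> S) T"
    have fx: "(x, f x) \<in> S" if hx: "x \<in> T" for x
    proof -
      obtain y where y: "(x,y) \<in> S" using hx T_def by force
      have "(THE y. (x, y) \<in> S) = y" using y uniq by blast
      then show ?thesis using y hx f_def by simp
    qed
    have Seq: "S = gr (T, f)"
    proof -
      have "S \<subseteq> (\<lambda>x. (x, f x)) ` T"
      proof
        fix z assume z: "z \<in> S"
        obtain a b where ab: "z = (a,b)" by force
        have "a \<in> T" using z ab T_def by force
        then show "z \<in> (\<lambda>x. (x, f x)) ` T" using fx[of a] uniq z ab by force
      qed
      moreover have "(\<lambda>x. (x, f x)) ` T \<subseteq> S" using fx by auto
      ultimately show ?thesis unfolding gr_def by auto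
    qed
    have injf: "inj_on fst S" using uniq by (auto simp: inj_on_def)
    have finS: "finite S" using Sn finite_subset by blast
    have "T \<in> Ts" unfolding Ts_def T_def using Sn card_image[OF injf] p(3) by auto
    moreover have "f \<in> Fs T"
      unfolding Fs_def
    proof (intro CollectI conjI)
      show "f \<in> T \<rightarrow>\<^sub>E {1..n}" using fx Sn f_def by auto
      show "inj_on f T"
      proof (rule inj_onI)
        fix x y assume "x \<in> T" "y \<in> T" "f x = f y"
        then show "x = y" using fx[of x] fx[of y] uniq2[of x "f x" y] by simp
      qed
    qed
    ultimately show "S \<in> gr ` Sigma Ts Fs" using Seq by blast
  qed
  have finTs: "finite Ts" unfolding Ts_def by auto
  have cardFs: "card (Fs T) = prod ((-) n) {0..<k}" if "T \<in> Ts" for T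
    using card_inj_on_subset_funcset[of T "{1..n}" T] that unfolding Ts_def Fs_def
    by (auto intro: finite_subset)
  have finSig: "finite (Sigma Ts Fs)"
    using finTs by (intro finite_SigmaI) (auto simp: Fs_def Ts_def intro!: finite_PiE intro: finite_subset)
  have "card F * ((n - 1) choose k) \<le> card (gr ` Sigma Ts Fs)"
    using eq1 sub finSig by (metis card_mono finite_imageI)
  also have "\<dots> \<le> card (Sigma Ts Fs)" by (rule card_image_le[OF finSig])
  also have "\<dots> = (\<Sum>T\<in>Ts. card (Fs T))"
    using finTs finSig by (intro card_SigmaI) (auto simp: Fs_def Ts_def intro!: finite_PiE intro: finite_subset)
  also have "\<dots> = card Ts * prod ((-) n) {0..<k}" using cardFs by simp
  also have "card Ts = n choose k" unfolding Ts_def using n_subsets[of "{1..n}" k] by simp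
  finally have main: "card F * ((n - 1) choose k) \<le> (n choose k) * prod ((-) n) {0..<k}" .
  have pf: "prod ((-) n) {0..<k} * fact d = fact n"
    using prod_fact[of k n] k_def assms by simp
  have bf: "(n choose d) * fact d * fact (n - d) = (fact n :: nat)"
    using binomial_fact_lemma[OF assms(3)] by (simp add: algebra_simps)
  have "prod ((-) n) {0..<k} * fact d = (n choose d) * fact (n - d) * fact d"
    using pf bf by (simp add: algebra_simps)
  then have P: "prod ((-) n) {0..<k} = (n choose d) * fact (n - d)" by simp
  have nk: "n choose k = n choose d" unfolding k_def using binomial_symmetric[OF assms(3)] by simp
  have main2: "card F * ((n - 1) choose k) \<le> (n choose d) * (n choose d) * fact (n - d)"
    using main P nk by (simp add: mult.assoc)
  have pos: "0 < (n - 1) choose k" using assms k_def by (intro zero_less_binomial) auto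
  have "real (card F) * real ((n - 1) choose k) \<le> real ((n choose d) * (n choose d) * fact (n - d))"
    using main2 by (metis of_nat_le_iff of_nat_mult)
  then show ?thesis using pos unfolding F_def k_def by (simp add: pos_le_divide_eq)
qed

end
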